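(* Let $n \ge 2$. Amongst all connected bipartite graphs on $n$ vertices, the maximum value of the normalized Graovac-Ghorbani index $\mathrm{NGG}$, and also the maximum value of the Graovac-Ghorbani index $\mathrm{GG}$, is attained by the complete bipartite graph $K_{\lfloor n/2\rfloor, \lceil n/2\rceil}$, and by no other such graph.
   Context: All graphs are finite, simple, undirected and connected. For an edge $uv$ of a graph $G$, let $n_u = |\{w \in V(G) : d(w,u) < d(w,v)\}|$ and $n_v = |\{w \in V(G) : d(w,v) < d(w,u)\}|$, where $d$ is the shortest-path distance. The Graovac-Ghorbani index is $\mathrm{GG}(G) = \sum_{uv \in E(G)} \sqrt{\frac{n_u + n_v - 2}{n_u n_v}}$ and the normalized Graovac-Ghorbani index is $\mathrm{NGG}(G) = \sum_{uv \in E(G)} \frac{1}{\sqrt{n_u n_v}}$. *)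

theory Defs
  imports Complex_Main
begin

type_synonym 'a graph = "'a set \<times> 'a set set"

definition verts :: "'a graph \<Rightarrow> 'a set" where "verts G = fst G"
definition edges :: "'a graph \<Rightarrow> 'a set set" where "edges G = snd G"

definition simple_graph :: "'a graph \<Rightarrow> bool" where
  "simple_graph G \<longleftrightarrow> finite (verts G) \<and>
     (\<forall>e\<in>edges G. \<exists>u v. e = {u, v} \<and> u \<noteq> v \<and> u \<in> verts G \<and> v \<in> verts G)"

definition adj :: "'a graph \<Rightarrow> 'a \<Rightarrow> 'a \<Rightarrow> bool" where
  "adj G u v \<longleftrightarrow> {u, v} \<in> edges G"

definition walk :: "'a graph \<Rightarrow> 'a list \<Rightarrow> bool" where
  "walk G p \<longleftrightarrow> p \<noteq> [] \<and> set p \<subseteq> verts G \<and>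
     (\<forall>i. Suc i < length p \<longrightarrow> adj G (p ! i) (p ! Suc i))"

definition connected_graph :: "'a graph \<Rightarrow> bool" where
  "connected_graph G \<longleftrightarrow> verts G \<noteq> {} \<and>
     (\<forall>u\<in>verts G. \<forall>v\<in>verts G. \<exists>p. walk G p \<and> hd p = u \<and> last p = v)"

definition dist :: "'a graph \<Rightarrow> 'a \<Rightarrow> 'a \<Rightarrow> nat" where
  "dist G u v = (LEAST k. \<exists>p. walk G p \<and> hd p = u \<and> last p = v \<and> length p = Suc k)"

definition bipartite :: "'a graph \<Rightarrow> bool" where
  "bipartite G \<longleftrightarrow> (\<exists>X Y. X \<inter> Y = {} \<and> X \<union> Y = verts G \<and>
     (\<forall>e\<in>edges G. \<exists>x\<in>X. \<exists>y\<in>Y. e = {x, y}))"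

definition nclose :: "'a graph \<Rightarrow> 'a \<Rightarrow> 'a \<Rightarrow> nat" where
  "nclose G u v = card {w \<in> verts G. dist G w u < dist G w v}"

text \<open>Value of a (symmetric) edge function f(n_u, n_v) on an edge e = {u,v}.\<close>
definition edge_val :: "'a graph \<Rightarrow> (nat \<Rightarrow> nat \<Rightarrow> real) \<Rightarrow> 'a set \<Rightarrow> real" where
  "edge_val G f e = (let u = (SOME u. u \<in> e); v = (SOME v. v \<in> e \<and> v \<noteq> u)
                     in f (nclose G u v) (nclose G v u))"

definition GG :: "'a graph \<Rightarrow> real" where
  "GG G = (\<Sum>e\<in>edges G. edge_val G
      (\<lambda>a b. sqrt ((real a + real b - 2) / (real a * real b))) e)"

definition NGG :: "'a graph \<Rightarrow> real" where
  "NGG G = (\<Sum>e\<in>edges G. edge_val G (\<lambda>a b. 1 / sqrt (real a * real b)) e)"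

definition complete_bipartite :: "nat \<Rightarrow> nat \<Rightarrow> nat graph" where
  "complete_bipartite a b = ({0..<a+b}, {{i, j} | i j. i < a \<and> a \<le> j \<and> j < a + b})"

definition graph_iso :: "'a graph \<Rightarrow> 'b graph \<Rightarrow> bool" where
  "graph_iso G H \<longleftrightarrow> (\<exists>f. bij_betw f (verts G) (verts H) \<and>
     (\<forall>u\<in>verts G. \<forall>v\<in>verts G. {u, v} \<in> edges G \<longleftrightarrow> {f u, f v} \<in> edges H))"

end

theory Submission
  imports Defs
begin

lemma adj_sym: "adj G a b \<Longrightarrow> adj G b a"
  by (simp add: adj_def insert_commute)

lemma adj_verts: "simple_graph G \<Longrightarrow> adj G a b \<Longrightarrow> a \<in> verts G \<and> b \<in> verts G \<and> a \<noteq> b"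
  unfolding simple_graph_def adj_def by (fastforce simp: doubleton_eq_iff)

lemma walk_one: "u \<in> verts G \<Longrightarrow> walk G [u]"
  by (simp add: walk_def)

lemma walk_two: "simple_graph G \<Longrightarrow> adj G u v \<Longrightarrow> walk G [u,v]"
  using adj_verts[of G u v] by (auto simp: walk_def less_Suc_eq)

lemma walk_three: assumes "simple_graph G" "adj G u w" "adj G w v" shows "walk G [u,w,v]"
  unfolding walk_def
proof (intro conjI allI impI)
  show "set [u, w, v] \<subseteq> verts G" using adj_verts[OF assms(1,2)] adj_verts[OF assms(1,3)] by simp
  fix i assume "Suc i < length [u, w, v]"
  then have "i = 0 \<or> i = 1" by (simp add: less_Suc_eq)
  then show "adj G ([u, w, v] ! i) ([u, w, v] ! Suc i)" using assms by auto
qed simp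

lemma dist_le: assumes "walk G p" "hd p = u" "last p = v" shows "dist G u v \<le> length p - 1"
proof -
  have "length p = Suc (length p - 1)" using assms(1) by (simp add: walk_def)
  then show ?thesis unfolding dist_def using assms by (intro Least_le) blast
qed

lemma dist_ex: assumes "connected_graph G" "u \<in> verts G" "v \<in> verts G"
  shows "\<exists>p. walk G p \<and> hd p = u \<and> last p = v \<and> length p = Suc (dist G u v)"
proof -
  obtain p where p: "walk G p" "hd p = u" "last p = v" using assms unfolding connected_graph_def by blast
  have "length p = Suc (length p - 1)" using p(1) by (simp add: walk_def)
  then have ex: "\<exists>k. \<exists>p. walk G p \<and> hd p = u \<and> last p = v \<and> length p = Suc k"
    using p by blast
  show ?thesis unfolding dist_def by (rule LeastI_ex[OF ex])
qed

lemma dist_refl: "u \<in> verts G \<Longrightarrow> dist G u u = 0"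
  using dist_le[OF walk_one, of u G u u] by simp

lemma walk_hd_last:
  assumes "walk G p" shows "hd p = p ! 0" "last p = p ! (length p - 1)"
  using assms by (auto simp: walk_def hd_conv_nth last_conv_nth)

lemma walk_adj: "walk G p \<Longrightarrow> Suc i < length p \<Longrightarrow> adj G (p!i) (p ! Suc i)"
  by (simp add: walk_def)

lemma dist_pos: assumes "connected_graph G" "u \<in> verts G" "v \<in> verts G" "u \<noteq> v"
  shows "dist G u v \<ge> 1"
proof (rule ccontr)
  assume "\<not> ?thesis"
  then have d: "dist G u v = 0" by simp
  obtain p where p: "walk G p" "hd p = u" "last p = v" "length p = Suc (dist G u v)"
    using dist_ex[OF assms(1-3)] by blast
  have "u = p ! 0" "v = p ! 0" using p walk_hd_last[OF p(1)] d by auto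
  then show False using assms(4) by simp
qed

lemma dist_adj: assumes "simple_graph G" "connected_graph G" "adj G u v"
  shows "dist G u v = 1"
proof -
  have "dist G u v \<le> 1" using dist_le[OF walk_two[OF assms(1,3)]] by simp
  moreover have "dist G u v \<ge> 1" using dist_pos[OF assms(2)] adj_verts[OF assms(1,3)] by blast
  ultimately show ?thesis by simp
qed

lemma dist_ge2: assumes "simple_graph G" "connected_graph G" "u \<in> verts G" "v \<in> verts G"
   "u \<noteq> v" "\<not> adj G u v"
  shows "dist G u v \<ge> 2"
proof (rule ccontr)
  assume "\<not> ?thesis"
  moreover have "dist G u v \<ge> 1" by (rule dist_pos[OF assms(2-5)])
  ultimately have d: "dist G u v = 1" by simp
  obtain p where p: "walk G p" "hd p = u" "last p = v" "length p = Suc (dist G u v)"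
    using dist_ex[OF assms(2-4)] by blast
  have "adj G (p!0) (p!1)" using walk_adj[OF p(1), of 0] p(4) d by simp
  moreover have "u = p ! 0" "v = p ! 1" using p walk_hd_last[OF p(1)] d by auto
  ultimately show False using assms(6) by simp
qed



definition nbr :: "'a graph \<Rightarrow> 'a \<Rightarrow> 'a set" where
  "nbr G u = {w \<in> verts G. adj G u w}"
definition closer :: "'a graph \<Rightarrow> 'a \<Rightarrow> 'a \<Rightarrow> 'a set" where
  "closer G u v = {w \<in> verts G. dist G w u < dist G w v}"
definition sel :: "'a set \<Rightarrow> 'a set \<Rightarrow> 'a" where
  "sel S e = (SOME x. x \<in> e \<and> x \<in> S)"

lemma nclose_closer: "nclose G u v = card (closer G u v)"
  by (simp add: nclose_def closer_def)

lemma walk_take: assumes "walk G p" "0 < k" "k \<le> length p"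
  shows "walk G (take k p)" "hd (take k p) = hd p" "last (take k p) = p ! (k - 1)"
proof -
  show "walk G (take k p)" using assms unfolding walk_def
    by (auto dest: in_set_takeD)
  show "hd (take k p) = hd p" using assms by (simp add: walk_def)
  show "last (take k p) = p ! (k - 1)" using assms
    by (simp add: last_conv_nth walk_def)
qed

locale bipg =
  fixes G :: "'a graph" and X Y :: "'a set"
  assumes simple: "simple_graph G" and conn: "connected_graph G"
    and disj: "X \<inter> Y = {}" and un: "X \<union> Y = verts G"
    and bip: "\<forall>e\<in>edges G. \<exists>x\<in>X. \<exists>y\<in>Y. e = {x, y}"
begin

lemma swap: "bipg G Y X"
proof
  show "\<forall>e\<in>edges G. \<exists>x\<in>Y. \<exists>y\<in>X. e = {x, y}" using bip by (metis insert_commute)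
qed (use simple conn disj un in auto)

lemma finV: "finite (verts G)" using simple by (simp add: simple_graph_def)
lemma finX: "finite X" using finV un by (metis finite_Un)
lemma finY: "finite Y" using finV un by (metis finite_Un)

lemma adj_sides: assumes "adj G a b" shows "(a \<in> X \<and> b \<in> Y) \<or> (a \<in> Y \<and> b \<in> X)"
proof -
  obtain x y where "x \<in> X" "y \<in> Y" "{a, b} = {x, y}" using bip assms unfolding adj_def by blast
  then show ?thesis by (auto simp: doubleton_eq_iff)
qed

lemma same_side: assumes "adj G u w" "adj G u v" shows "\<not> adj G w v"
proof
  assume "adj G w v"
  from adj_sides[OF this] adj_sides[OF assms(1)] adj_sides[OF assms(2)] disj show False by blast
qed

lemma closer_sub: assumes "adj G u v" shows "insert u (nbr G u - {v}) \<subseteq> closer G u v"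
proof
  fix w assume w: "w \<in> insert u (nbr G u - {v})"
  have uv: "u \<in> verts G" "v \<in> verts G" "u \<noteq> v" using adj_verts[OF simple assms] by auto
  show "w \<in> closer G u v"
  proof (cases "w = u")
    case True
    then show ?thesis using uv dist_refl[of u G] dist_adj[OF simple conn assms] unfolding closer_def by simp
  next
    case False
    then have "w \<in> nbr G u" "w \<noteq> v" using w by auto
    then have aw: "adj G u w" "w \<in> verts G" unfolding nbr_def by auto
    have "dist G w u = 1" using dist_adj[OF simple conn adj_sym[OF aw(1)]] .
    moreover have "dist G w v \<ge> 2"
      using dist_ge2[OF simple conn aw(2) uv(2) \<open>w \<noteq> v\<close> same_side[OF aw(1) assms]] .
    ultimately show ?thesis using aw(2) unfolding closer_def by simp
  qed
qed

lemma closer_fin: "finite (closer G u v)"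
  using finV unfolding closer_def by simp

lemma card_nbr: assumes "adj G u v" shows "card (insert u (nbr G u - {v})) = card (nbr G u)"
proof -
  have fin: "finite (nbr G u)" using finV unfolding nbr_def by simp
  have "u \<notin> nbr G u" using adj_verts[OF simple] unfolding nbr_def by blast
  moreover have "v \<in> nbr G u" using assms adj_verts[OF simple assms] unfolding nbr_def by simp
  ultimately show ?thesis using fin
    by (simp add: card_Diff_singleton) (metis card_Diff1_less card_gt_0_iff Suc_pred empty_iff)
qed

lemma nbr_le: assumes "adj G u v" shows "card (nbr G u) \<le> nclose G u v"
  unfolding nclose_closer card_nbr[OF assms, symmetric]
  by (rule card_mono[OF closer_fin closer_sub[OF assms]])

lemma nclose_sum: "nclose G u v + nclose G v u \<le> card (verts G)"
proof -
  have "closer G u v \<inter> closer G v u = {}" unfolding closer_def by auto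
  then have "card (closer G u v \<union> closer G v u) = nclose G u v + nclose G v u"
    by (simp add: card_Un_disjoint closer_fin nclose_closer)
  moreover have "closer G u v \<union> closer G v u \<subseteq> verts G" unfolding closer_def by auto
  ultimately show ?thesis by (metis card_mono finV)
qed

end


context bipg begin

lemma no_dist2: assumes "x \<in> X" "y \<in> Y" shows "dist G x y \<noteq> 2"
proof
  assume d: "dist G x y = 2"
  have xy: "x \<in> verts G" "y \<in> verts G" using assms un by auto
  obtain p where p: "walk G p" "hd p = x" "last p = y" "length p = Suc (dist G x y)"
    using dist_ex[OF conn xy] by blast
  have a1: "adj G (p!0) (p!1)" using walk_adj[OF p(1), of 0] p(4) d by simp
  have a2: "adj G (p!1) (p!2)" using walk_adj[OF p(1), of 1] p(4) d by (simp add: numeral_2_eq_2)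
  have "x = p ! 0" "y = p ! 2" using p walk_hd_last[OF p(1)] d by auto
  then show False using adj_sides[OF a1] adj_sides[OF a2] assms disj by auto
qed

lemma nbr_strict: assumes "x \<in> X" "y \<in> Y" "\<not> adj G x y"
  shows "\<exists>u v. adj G u v \<and> card (nbr G u) < nclose G u v"
proof -
  have xy: "x \<in> verts G" "y \<in> verts G" using assms un by auto
  have "x \<noteq> y" using assms disj by auto
  define d where "d = dist G x y"
  have "d \<ge> 2" unfolding d_def using dist_ge2[OF simple conn xy \<open>x \<noteq> y\<close> assms(3)] .
  then have d3: "d \<ge> 3" using no_dist2[OF assms(1,2)] unfolding d_def by linarith
  obtain p where p: "walk G p" "hd p = x" "last p = y" "length p = Suc d"
    using dist_ex[OF conn xy] unfolding d_def by blast
  define u where "u = p ! (d - 1)"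
  have yl: "y = p ! d" using walk_hd_last(2)[OF p(1)] p(3,4) by simp
  have auy: "adj G u y" unfolding u_def yl using walk_adj[OF p(1), of "d - 1"] p(4) d3 by simp
  have dd: "0 < d" "d \<le> length p" using d3 p(4) by auto
  have wt: "walk G (take d p)" "hd (take d p) = x" "last (take d p) = u"
    using walk_take[OF p(1) dd] p(2) unfolding u_def by simp_all
  have "dist G x u \<le> d - 1" using dist_le[OF wt] d3 by simp
  then have xc: "x \<in> closer G u y" using xy d3 unfolding closer_def d_def by simp
  have "x \<noteq> u" using auy assms(3) by auto
  moreover have "x \<notin> nbr G u"
  proof
    assume "x \<in> nbr G u"
    then have "adj G x u" unfolding nbr_def by (simp add: adj_sym)
    have "dist G x y \<le> length [x,u,y] - 1" by (rule dist_le[OF walk_three[OF simple \<open>adj G x u\<close> auy]]) simp_all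
    then have "dist G x y \<le> 2" by simp
    then show False using d3 unfolding d_def by simp
  qed
  ultimately have xn: "x \<notin> insert u (nbr G u - {y})" by simp
  have sub: "insert x (insert u (nbr G u - {y})) \<subseteq> closer G u y"
    using closer_sub[OF auy] xc by simp
  have fin: "finite (insert u (nbr G u - {y}))" using finV unfolding nbr_def by simp
  have "card (insert x (insert u (nbr G u - {y}))) = Suc (card (nbr G u))"
    using card_nbr[OF auy] xn fin by simp
  then have "card (nbr G u) < nclose G u y"
    using card_mono[OF closer_fin sub] unfolding nclose_closer by simp
  then show ?thesis using auy by blast
qed

lemma sel_eq: assumes "x \<in> X" "y \<in> Y" shows "sel X {x, y} = x"
  unfolding sel_def
proof (rule some_equality)
  show "x \<in> {x, y} \<and> x \<in> X" using assms by simp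
  fix z assume "z \<in> {x, y} \<and> z \<in> X"
  then show "z = x" using assms disj by blast
qed

lemma edge_form: assumes "e \<in> edges G"
  shows "\<exists>x y. x \<in> X \<and> y \<in> Y \<and> e = {x, y} \<and> adj G x y"
proof -
  obtain x y where "x \<in> X" "y \<in> Y" "e = {x, y}" using bip assms by blast
  then show ?thesis using assms unfolding adj_def by blast
qed

lemma deg_eq: assumes "x \<in> X"
  shows "{e \<in> edges G. sel X e = x} = (\<lambda>w. {x, w}) ` nbr G x"
proof
  show "{e \<in> edges G. sel X e = x} \<subseteq> (\<lambda>w. {x, w}) ` nbr G x"
  proof
    fix e assume "e \<in> {e \<in> edges G. sel X e = x}"
    then have e: "e \<in> edges G" "sel X e = x" by auto
    obtain x' y where xy: "x' \<in> X" "y \<in> Y" "e = {x', y}" "adj G x' y" using edge_form[OF e(1)] by blast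
    have "x' = x" using sel_eq[OF xy(1,2)] e(2) xy(3) by simp
    then have "y \<in> nbr G x" using xy(4) adj_verts[OF simple xy(4)] unfolding nbr_def by simp
    moreover have "e = {x, y}" using xy(3) \<open>x' = x\<close> by simp
    ultimately show "e \<in> (\<lambda>w. {x, w}) ` nbr G x" by (rule rev_image_eqI)
  qed
next
  show "(\<lambda>w. {x, w}) ` nbr G x \<subseteq> {e \<in> edges G. sel X e = x}"
  proof
    fix e assume "e \<in> (\<lambda>w. {x, w}) ` nbr G x"
    then obtain w where w: "w \<in> nbr G x" "e = {x, w}" by auto
    then have a: "adj G x w" unfolding nbr_def by auto
    have "w \<in> Y" using adj_sides[OF a] assms disj by blast
    then have "sel X e = x" using sel_eq[OF assms] w(2) by simp
    moreover have "e \<in> edges G" using a w(2) unfolding adj_def by simp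
    ultimately show "e \<in> {e \<in> edges G. sel X e = x}" by simp
  qed
qed

lemma deg_card: assumes "x \<in> X"
  shows "card {e \<in> edges G. sel X e = x} = card (nbr G x)"
proof -
  have "inj_on (\<lambda>w. {x, w}) (nbr G x)"
  proof (rule inj_onI)
    fix w w' assume "{x, w} = {x, w'}" then show "w = w'" by (metis doubleton_eq_iff)
  qed
  then show ?thesis unfolding deg_eq[OF assms] by (rule card_image)
qed

end

lemma edge_val_pair:
  assumes "u \<noteq> v" "\<And>a b. f a b = f b a"
  shows "edge_val G f {u, v} = f (nclose G u v) (nclose G v u)"
proof -
  define u' where "u' = (SOME u'. u' \<in> {u, v})"
  have u': "u' \<in> {u, v}" unfolding u'_def by (rule someI[of _ u]) simp
  define v' where "v' = (SOME v'. v' \<in> {u, v} \<and> v' \<noteq> u')"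
  have v': "v' \<in> {u, v} \<and> v' \<noteq> u'" unfolding v'_def
    by (rule someI[of _ "if u' = u then v else u"]) (use u' assms(1) in auto)
  have e: "edge_val G f {u, v} = f (nclose G u' v') (nclose G v' u')"
    unfolding edge_val_def Let_def u'_def v'_def by (rule refl)
  show ?thesis
  proof (cases "u' = u")
    case True
    then have "v' = v" using v' by auto
    then show ?thesis using e True by simp
  next
    case False
    then have "u' = v" "v' = u" using u' v' by auto
    then show ?thesis using e assms(2) by simp
  qed
qed

lemma sum_inv_card:
  assumes "finite E"
  shows "(\<Sum>e\<in>E. 1 / real (card {e' \<in> E. f e' = f e})) = real (card (f ` E))"
proof -
  have "(\<Sum>e\<in>E. 1 / real (card {e' \<in> E. f e' = f e}))
      = (\<Sum>y\<in>f ` E. \<Sum>e\<in>{x \<in> E. f x = y}. 1 / real (card {e' \<in> E. f e' = f e}))"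
    by (rule sum.image_gen[OF assms])
  also have "\<dots> = (\<Sum>y\<in>f ` E. 1)"
  proof (rule sum.cong[OF refl])
    fix y assume y: "y \<in> f ` E"
    define S where "S = {x \<in> E. f x = y}"
    have "S \<noteq> {}" using y unfolding S_def by auto
    moreover have "finite S" using assms unfolding S_def by simp
    ultimately have c: "card S > 0" by (simp add: card_gt_0_iff)
    have "(\<Sum>e\<in>S. 1 / real (card {e' \<in> E. f e' = f e})) = (\<Sum>e\<in>S. 1 / real (card S))"
      by (rule sum.cong) (auto simp: S_def)
    also have "\<dots> = 1" using c by simp
    finally show "(\<Sum>e\<in>{x \<in> E. f x = y}. 1 / real (card {e' \<in> E. f e' = f e})) = 1"
      unfolding S_def .
  qed
  also have "\<dots> = real (card (f ` E))" by simp
  finally show ?thesis .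
qed

lemma amgm_edge:
  fixes p q dp dq c :: real
  assumes "0 < dp" "0 < dq" "dp \<le> p" "dq \<le> q" "0 < c"
  shows "1 / sqrt (p * q) \<le> (c / dp + 1 / (c * dq)) / 2"
    and "dp < p \<or> dq < q \<Longrightarrow> 1 / sqrt (p * q) < (c / dp + 1 / (c * dq)) / 2"
proof -
  define s where "s = c / dp"
  define t where "t = 1 / (c * dq)"
  have st: "s * t = 1 / (dp * dq)" unfolding s_def t_def using assms by (simp add: field_simps)
  have "s > 0" "t > 0" unfolding s_def t_def using assms by auto
  have "0 \<le> (sqrt s - sqrt t)^2" by simp
  also have "\<dots> = s + t - 2 * sqrt (s * t)" using \<open>s > 0\<close> \<open>t > 0\<close>
    by (simp add: power2_diff real_sqrt_mult)
  finally have am: "sqrt (s * t) \<le> (s + t) / 2" by simp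
  have sd: "sqrt (s * t) = 1 / sqrt (dp * dq)" unfolding st by (simp add: real_sqrt_divide)
  have pq: "dp * dq \<le> p * q" using assms by (intro mult_mono) auto
  have pos: "0 < dp * dq" using assms by simp
  have le: "1 / sqrt (p * q) \<le> 1 / sqrt (dp * dq)"
    using pq pos by (intro divide_left_mono) auto
  show "1 / sqrt (p * q) \<le> (c / dp + 1 / (c * dq)) / 2"
    using le am sd unfolding s_def t_def by linarith
  assume "dp < p \<or> dq < q"
  then have "dp * dq < p * q"
  proof
    assume "dp < p"
    have "dp * dq < p * dq" using \<open>dp < p\<close> assms(2) by (rule mult_strict_right_mono)
    also have "\<dots> \<le> p * q" using assms by (intro mult_left_mono) auto
    finally show ?thesis .
  next
    assume "dq < q"
    have "dp * dq < dp * q" using \<open>dq < q\<close> assms(1) by (rule mult_strict_left_mono)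
    also have "\<dots> \<le> p * q" using assms by (intro mult_right_mono) auto
    finally show ?thesis .
  qed
  then have "1 / sqrt (p * q) < 1 / sqrt (dp * dq)"
    using pos by (intro divide_strict_left_mono) auto
  then show "1 / sqrt (p * q) < (c / dp + 1 / (c * dq)) / 2"
    using am sd unfolding s_def t_def by linarith
qed



definition nS :: "'a graph \<Rightarrow> 'a set \<Rightarrow> 'a set \<Rightarrow> 'a set \<Rightarrow> real" where
  "nS G X Y e = real (nclose G (sel X e) (sel Y e))"
definition dg :: "'a graph \<Rightarrow> 'a set \<Rightarrow> 'a set \<Rightarrow> real" where
  "dg G X e = real (card {e' \<in> edges G. sel X e' = sel X e})"

context bipg begin

lemma edge_sel: assumes "e \<in> edges G"
  shows "e = {sel X e, sel Y e} \<and> sel X e \<in> X \<and> sel Y e \<in> Y \<and> adj G (sel X e) (sel Y e)"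
proof -
  obtain x y where xy: "x \<in> X" "y \<in> Y" "e = {x, y}" "adj G x y" using edge_form[OF assms] by blast
  have "sel X e = x" using sel_eq[OF xy(1,2)] xy(3) by simp
  moreover have "sel Y e = y" using bipg.sel_eq[OF swap xy(2,1)] xy(3) by (simp add: insert_commute)
  ultimately show ?thesis using xy by simp
qed

lemma finE: "finite (edges G)"
proof -
  have "edges G \<subseteq> Pow (verts G)" using simple unfolding simple_graph_def by auto
  then show ?thesis using finV by (metis finite_Pow_iff finite_subset)
qed

lemma dg_le: assumes "e \<in> edges G" shows "1 \<le> dg G X e" "dg G X e \<le> nS G X Y e"
proof -
  have "e \<in> {e' \<in> edges G. sel X e' = sel X e}" using assms by simp
  moreover have "finite {e' \<in> edges G. sel X e' = sel X e}" using finE by simp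
  ultimately have "card {e' \<in> edges G. sel X e' = sel X e} \<ge> 1"
    by (metis One_nat_def Suc_leI card_gt_0_iff empty_iff)
  then show "1 \<le> dg G X e" unfolding dg_def by simp
  have es: "sel X e \<in> X" "adj G (sel X e) (sel Y e)" using edge_sel[OF assms] by auto
  show "dg G X e \<le> nS G X Y e"
    unfolding dg_def nS_def deg_card[OF es(1)] using nbr_le[OF es(2)] by simp
qed

lemma NGG_eq: "NGG G = (\<Sum>e\<in>edges G. 1 / sqrt (nS G X Y e * nS G Y X e))"
  unfolding NGG_def
proof (rule sum.cong[OF refl])
  fix e assume e: "e \<in> edges G"
  have es: "e = {sel X e, sel Y e}" "adj G (sel X e) (sel Y e)" using edge_sel[OF e] by auto
  have ne: "sel X e \<noteq> sel Y e" using adj_verts[OF simple es(2)] by simp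
  show "edge_val G (\<lambda>a b. 1 / sqrt (real a * real b)) e = 1 / sqrt (nS G X Y e * nS G Y X e)"
    by (subst es(1), subst edge_val_pair[OF ne]) (auto simp: nS_def mult.commute)
qed

lemma GG_eq: "GG G = (\<Sum>e\<in>edges G. sqrt ((nS G X Y e + nS G Y X e - 2) / (nS G X Y e * nS G Y X e)))"
  unfolding GG_def
proof (rule sum.cong[OF refl])
  fix e assume e: "e \<in> edges G"
  have es: "e = {sel X e, sel Y e}" "adj G (sel X e) (sel Y e)" using edge_sel[OF e] by auto
  have ne: "sel X e \<noteq> sel Y e" using adj_verts[OF simple es(2)] by simp
  show "edge_val G (\<lambda>a b. sqrt ((real a + real b - 2) / (real a * real b))) e
      = sqrt ((nS G X Y e + nS G Y X e - 2) / (nS G X Y e * nS G Y X e))"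
    by (subst es(1), subst edge_val_pair[OF ne]) (auto simp: nS_def mult.commute add.commute)
qed

end


context bipg begin

lemma sum_bnd:
  assumes c: "c > 0"
  shows "(\<Sum>e\<in>edges G. (c / dg G X e + 1 / (c * dg G Y e)) / 2)
     = (c * real (card (sel X ` edges G)) + (1 / c) * real (card (sel Y ` edges G))) / 2"
proof -
  have "(\<Sum>e\<in>edges G. (c / dg G X e + 1 / (c * dg G Y e)) / 2)
      = (c * (\<Sum>e\<in>edges G. 1 / dg G X e) + (1 / c) * (\<Sum>e\<in>edges G. 1 / dg G Y e)) / 2"
    by (simp add: sum_divide_distrib[symmetric] sum.distrib sum_distrib_left)
  also have "(\<Sum>e\<in>edges G. 1 / dg G X e) = real (card (sel X ` edges G))"
    unfolding dg_def by (rule sum_inv_card[OF finE])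
  also have "(\<Sum>e\<in>edges G. 1 / dg G Y e) = real (card (sel Y ` edges G))"
    unfolding dg_def by (rule sum_inv_card[OF finE])
  finally show ?thesis .
qed

lemma bound_core:
  assumes ne: "edges G \<noteq> {}"
  shows "NGG G \<le> sqrt (real (card X) * real (card Y))"
    and "(\<exists>e\<in>edges G. dg G X e < nS G X Y e \<or> dg G Y e < nS G Y X e) \<Longrightarrow>
         NGG G < sqrt (real (card X) * real (card Y))"
proof -
  obtain e0 where e0: "e0 \<in> edges G" using ne by blast
  have "sel X e0 \<in> X" "sel Y e0 \<in> Y" using edge_sel[OF e0] by auto
  then have cX: "card X > 0" and cY: "card Y > 0" using finX finY by (auto simp: card_gt_0_iff)
  define c where "c = sqrt (real (card Y)) / sqrt (real (card X))"
  have c0: "c > 0" unfolding c_def using cX cY by simp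
  define bnd where "bnd e = (c / dg G X e + 1 / (c * dg G Y e)) / 2" for e
  define tm where "tm e = 1 / sqrt (nS G X Y e * nS G Y X e)" for e
  have dgY: "1 \<le> dg G Y e" "dg G Y e \<le> nS G Y X e" if "e \<in> edges G" for e
    using bipg.dg_le[OF swap that] .
  have tm_le: "tm e \<le> bnd e" if "e \<in> edges G" for e
    unfolding tm_def bnd_def
    by (rule amgm_edge(1)) (use dg_le[OF that] dgY[OF that] c0 in auto)
  have tm_lt: "tm e < bnd e" if "e \<in> edges G" "dg G X e < nS G X Y e \<or> dg G Y e < nS G Y X e" for e
    unfolding tm_def bnd_def
    by (rule amgm_edge(2)) (use dg_le[OF that(1)] dgY[OF that(1)] c0 that(2) in auto)
  have sub1: "sel X ` edges G \<subseteq> X" using edge_sel by auto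
  have sub2: "sel Y ` edges G \<subseteq> Y" using edge_sel by auto
  have k1: "card (sel X ` edges G) \<le> card X" by (rule card_mono[OF finX sub1])
  have k2: "card (sel Y ` edges G) \<le> card Y" by (rule card_mono[OF finY sub2])
  have "(\<Sum>e\<in>edges G. bnd e) = (c * real (card (sel X ` edges G)) + (1 / c) * real (card (sel Y ` edges G))) / 2"
    unfolding bnd_def by (rule sum_bnd[OF c0])
  also have "\<dots> \<le> (c * real (card X) + (1 / c) * real (card Y)) / 2"
    using k1 k2 c0 by (intro divide_right_mono add_mono mult_left_mono) auto
  also have "\<dots> = sqrt (real (card X) * real (card Y))"
  proof -
    have sx: "sqrt (real (card X)) > 0" using cX by simp
    have sy: "sqrt (real (card Y)) > 0" using cY by simp
    have "c * real (card X) = sqrt (real (card Y)) * sqrt (real (card X))"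
      unfolding c_def using sx by (simp add: field_simps; metis of_nat_0_le_iff real_sqrt_pow2 power2_eq_square)
    moreover have "(1 / c) * real (card Y) = sqrt (real (card Y)) * sqrt (real (card X))"
      unfolding c_def using sy by (simp add: field_simps; metis of_nat_0_le_iff real_sqrt_pow2 power2_eq_square)
    ultimately show ?thesis by (simp add: real_sqrt_mult mult.commute)
  qed
  finally have B: "(\<Sum>e\<in>edges G. bnd e) \<le> sqrt (real (card X) * real (card Y))" .
  have N: "NGG G = (\<Sum>e\<in>edges G. tm e)" unfolding NGG_eq tm_def ..
  show "NGG G \<le> sqrt (real (card X) * real (card Y))"
    unfolding N using sum_mono[of "edges G" tm bnd] tm_le B by fastforce
  assume "\<exists>e\<in>edges G. dg G X e < nS G X Y e \<or> dg G Y e < nS G Y X e"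
  then have "(\<Sum>e\<in>edges G. tm e) < (\<Sum>e\<in>edges G. bnd e)"
    using tm_le tm_lt by (intro sum_strict_mono_ex1[OF finE]) auto
  then show "NGG G < sqrt (real (card X) * real (card Y))" unfolding N using B by simp
qed

end


context bipg begin

lemma NGG_le: "NGG G \<le> sqrt (real (card X) * real (card Y))"
proof (cases "edges G = {}")
  case True then show ?thesis by (simp add: NGG_def)
next
  case False then show ?thesis by (rule bound_core(1))
qed

lemma NGG_less: assumes "x \<in> X" "y \<in> Y" "\<not> adj G x y"
  shows "NGG G < sqrt (real (card X) * real (card Y))"
proof -
  obtain u v where uv: "adj G u v" "card (nbr G u) < nclose G u v" using nbr_strict[OF assms] by blast
  define e where "e = {u, v}"
  have eE: "e \<in> edges G" using uv(1) unfolding e_def adj_def .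
  have "dg G X e < nS G X Y e \<or> dg G Y e < nS G Y X e"
  proof (cases "u \<in> X \<and> v \<in> Y")
    case True
    then have "sel X e = u" "sel Y e = v"
      using sel_eq bipg.sel_eq[OF swap, of v u] unfolding e_def by (auto simp: insert_commute)
    then have "dg G X e < nS G X Y e" unfolding dg_def nS_def using deg_card[of u] True uv(2) by simp
    then show ?thesis ..
  next
    case False
    then have uy: "u \<in> Y \<and> v \<in> X" using adj_sides[OF uv(1)] by blast
    then have "sel X e = v" "sel Y e = u"
      using sel_eq[of v u] bipg.sel_eq[OF swap, of u v] unfolding e_def by (auto simp: insert_commute)
    then have "dg G Y e < nS G Y X e" unfolding dg_def nS_def using bipg.deg_card[OF swap, of u] uy uv(2) by simp
    then show ?thesis ..
  qed
  then show ?thesis using bound_core(2) eE by blast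
qed

lemma nS_bounds: assumes "e \<in> edges G"
  shows "1 \<le> nS G X Y e" "1 \<le> nS G Y X e" "nS G X Y e + nS G Y X e \<le> real (card (verts G))"
proof -
  show "1 \<le> nS G X Y e" using dg_le[OF assms] by linarith
  show "1 \<le> nS G Y X e" using bipg.dg_le[OF swap assms] by linarith
  show "nS G X Y e + nS G Y X e \<le> real (card (verts G))"
    unfolding nS_def using nclose_sum[of "sel X e" "sel Y e"] by linarith
qed

lemma GG_term:
  fixes p q n :: real
  assumes "1 \<le> p" "1 \<le> q" "p + q \<le> n"
  shows "sqrt ((p + q - 2) / (p * q)) \<le> sqrt (n - 2) * (1 / sqrt (p * q))"
proof -
  have pq: "p * q > 0" using assms by simp
  have "sqrt ((p + q - 2) / (p * q)) = sqrt (p + q - 2) / sqrt (p * q)" by (simp add: real_sqrt_divide)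
  also have "\<dots> \<le> sqrt (n - 2) / sqrt (p * q)"
    using assms pq by (intro divide_right_mono) auto
  finally show ?thesis by simp
qed

lemma GG_le: "GG G \<le> sqrt (real (card (verts G)) - 2) * NGG G"
proof -
  have "GG G \<le> (\<Sum>e\<in>edges G. sqrt (real (card (verts G)) - 2) * (1 / sqrt (nS G X Y e * nS G Y X e)))"
    unfolding GG_eq by (rule sum_mono) (rule GG_term, use nS_bounds in auto)
  also have "\<dots> = sqrt (real (card (verts G)) - 2) * NGG G"
    unfolding NGG_eq by (simp add: sum_distrib_left)
  finally show ?thesis .
qed

end


lemma K_verts: "verts (complete_bipartite a b) = {0..<a+b}"
  by (simp add: complete_bipartite_def verts_def)

lemma K_edges: "edges (complete_bipartite a b) = {{i, j} | i j. i < a \<and> a \<le> j \<and> j < a + b}"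
  by (simp add: complete_bipartite_def edges_def)

lemma K_adj: "adj (complete_bipartite a b) u w \<longleftrightarrow>
   (u < a \<and> a \<le> w \<and> w < a + b) \<or> (w < a \<and> a \<le> u \<and> u < a + b)"
proof
  assume "adj (complete_bipartite a b) u w"
  then obtain i j where "{u, w} = {i, j}" "i < a" "a \<le> j" "j < a + b"
    unfolding adj_def K_edges by blast
  then show "(u < a \<and> a \<le> w \<and> w < a + b) \<or> (w < a \<and> a \<le> u \<and> u < a + b)"
    by (auto simp: doubleton_eq_iff)
next
  assume "(u < a \<and> a \<le> w \<and> w < a + b) \<or> (w < a \<and> a \<le> u \<and> u < a + b)"
  then show "adj (complete_bipartite a b) u w"
  proof
    assume "u < a \<and> a \<le> w \<and> w < a + b"
    then show ?thesis unfolding adj_def K_edges by blast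
  next
    assume h: "w < a \<and> a \<le> u \<and> u < a + b"
    have "{u, w} = {w, u}" by (rule insert_commute)
    then show ?thesis unfolding adj_def K_edges using h by blast
  qed
qed

lemma K_simple: "simple_graph (complete_bipartite a b)"
  unfolding simple_graph_def
proof (intro conjI ballI)
  show "finite (verts (complete_bipartite a b))" unfolding K_verts by simp
  fix e assume "e \<in> edges (complete_bipartite a b)"
  then obtain i j where h: "e = {i, j}" "i < a" "a \<le> j" "j < a + b" unfolding K_edges by blast
  show "\<exists>u v. e = {u, v} \<and> u \<noteq> v \<and> u \<in> verts (complete_bipartite a b) \<and> v \<in> verts (complete_bipartite a b)"
    by (rule exI[of _ i], rule exI[of _ j]) (use h in \<open>simp add: K_verts\<close>)
qed

lemma K_conn: assumes "1 \<le> a" "1 \<le> b" shows "connected_graph (complete_bipartite a b)"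
  unfolding connected_graph_def
proof (intro conjI ballI)
  show "verts (complete_bipartite a b) \<noteq> {}" using assms unfolding K_verts by simp
  fix u v assume uv: "u \<in> verts (complete_bipartite a b)" "v \<in> verts (complete_bipartite a b)"
  then have uv': "u < a + b" "v < a + b" unfolding K_verts by auto
  show "\<exists>p. walk (complete_bipartite a b) p \<and> hd p = u \<and> last p = v"
  proof (cases "u < a")
    case True
    show ?thesis
    proof (cases "v < a")
      case True
      have "walk (complete_bipartite a b) [u, a, v]"
        by (rule walk_three[OF K_simple]) (use \<open>u < a\<close> True assms in \<open>auto simp: K_adj\<close>)
      then show ?thesis by force
    next
      case False
      have "walk (complete_bipartite a b) [u, v]"
        by (rule walk_two[OF K_simple]) (use \<open>u < a\<close> False uv' in \<open>auto simp: K_adj\<close>)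
      then show ?thesis by force
    qed
  next
    case False
    show ?thesis
    proof (cases "v < a")
      case True
      have "walk (complete_bipartite a b) [u, v]"
        by (rule walk_two[OF K_simple]) (use False True uv' in \<open>auto simp: K_adj\<close>)
      then show ?thesis by force
    next
      case F2: False
      have "walk (complete_bipartite a b) [u, 0, v]"
        by (rule walk_three[OF K_simple]) (use False F2 uv' assms in \<open>auto simp: K_adj\<close>)
      then show ?thesis by force
    qed
  qed
qed

lemma K_bipg: assumes "1 \<le> a" "1 \<le> b"
  shows "bipg (complete_bipartite a b) {0..<a} {a..<a+b}"
proof
  show "\<forall>e\<in>edges (complete_bipartite a b). \<exists>x\<in>{0..<a}. \<exists>y\<in>{a..<a + b}. e = {x, y}"
    unfolding K_edges
  proof (intro ballI)
    fix e assume "e \<in> {{i, j} |i j. i < a \<and> a \<le> j \<and> j < a + b}"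
    then obtain i j where h: "e = {i, j}" "i < a" "a \<le> j" "j < a + b" by blast
    show "\<exists>x\<in>{0..<a}. \<exists>y\<in>{a..<a + b}. e = {x, y}"
      by (rule bexI[of _ i], rule bexI[of _ j]) (use h in auto)
  qed
qed (auto simp: K_simple K_conn[OF assms] K_verts)

lemma K_bip: assumes "1 \<le> a" "1 \<le> b" shows "bipartite (complete_bipartite a b)"
  unfolding bipartite_def using bipg.disj[OF K_bipg[OF assms]] bipg.un[OF K_bipg[OF assms]]
    bipg.bip[OF K_bipg[OF assms]] by blast

lemma K_nbr1: "i < a \<Longrightarrow> nbr (complete_bipartite a b) i = {a..<a+b}"
  unfolding nbr_def K_verts K_adj by auto

lemma K_nbr2: "a \<le> j \<Longrightarrow> j < a + b \<Longrightarrow> nbr (complete_bipartite a b) j = {0..<a}"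
  unfolding nbr_def K_verts K_adj by auto

lemma K_card_edges: "card (edges (complete_bipartite a b)) = a * b"
proof -
  have eq: "edges (complete_bipartite a b) = (\<lambda>(i, j). {i, j}) ` ({0..<a} \<times> {a..<a+b})"
  proof (rule set_eqI)
    fix e
    show "e \<in> edges (complete_bipartite a b) \<longleftrightarrow> e \<in> (\<lambda>(i, j). {i, j}) ` ({0..<a} \<times> {a..<a+b})"
    proof
      assume "e \<in> edges (complete_bipartite a b)"
      then obtain i j where h: "e = {i, j}" "i < a" "a \<le> j" "j < a + b" unfolding K_edges by blast
      show "e \<in> (\<lambda>(i, j). {i, j}) ` ({0..<a} \<times> {a..<a+b})"
        by (rule image_eqI[of _ _ "(i, j)"]) (use h in auto)
    next
      assume "e \<in> (\<lambda>(i, j). {i, j}) ` ({0..<a} \<times> {a..<a+b})"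
      then obtain i j where h: "e = {i, j}" "i < a" "a \<le> j" "j < a + b" by auto
      then show "e \<in> edges (complete_bipartite a b)" unfolding K_edges by blast
    qed
  qed
  have inj: "inj_on (\<lambda>(i, j). {i, j}) ({0..<a} \<times> {a..<a+b})"
  proof (rule inj_onI)
    fix x y assume h: "x \<in> {0..<a} \<times> {a..<a+b}" "y \<in> {0..<a} \<times> {a..<a+b}"
      "(\<lambda>(i, j). {i, j}) x = (\<lambda>(i, j). {i, j}) y"
    obtain i j where x: "x = (i, j)" by force
    obtain i' j' where y: "y = (i', j')" by force
    show "x = y" using h unfolding x y by (auto simp: doubleton_eq_iff)
  qed
  show ?thesis unfolding eq card_image[OF inj] by simp
qed

lemma K_nS: assumes "1 \<le> a" "1 \<le> b" "e \<in> edges (complete_bipartite a b)"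
  shows "nS (complete_bipartite a b) {0..<a} {a..<a+b} e = real b"
    and "nS (complete_bipartite a b) {a..<a+b} {0..<a} e = real a"
proof -
  interpret bipg "complete_bipartite a b" "{0..<a}" "{a..<a+b}" by (rule K_bipg[OF assms(1,2)])
  have es: "sel {0..<a} e \<in> {0..<a}" "sel {a..<a+b} e \<in> {a..<a+b}" using edge_sel[OF assms(3)] by auto
  have d1: "dg (complete_bipartite a b) {0..<a} e = real b"
    unfolding dg_def deg_card[OF es(1)] using es(1) by (simp add: K_nbr1)
  have d2: "dg (complete_bipartite a b) {a..<a+b} e = real a"
    unfolding dg_def bipg.deg_card[OF swap es(2)] using es(2) by (simp add: K_nbr2)
  have l1: "real b \<le> nS (complete_bipartite a b) {0..<a} {a..<a+b} e" using dg_le(2)[OF assms(3)] d1 by simp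
  have l2: "real a \<le> nS (complete_bipartite a b) {a..<a+b} {0..<a} e" using bipg.dg_le(2)[OF swap assms(3)] d2 by simp
  have s: "nS (complete_bipartite a b) {0..<a} {a..<a+b} e + nS (complete_bipartite a b) {a..<a+b} {0..<a} e \<le> real (a + b)"
    using nS_bounds(3)[OF assms(3)] by (simp add: K_verts)
  show "nS (complete_bipartite a b) {0..<a} {a..<a+b} e = real b" using l1 l2 s by simp
  show "nS (complete_bipartite a b) {a..<a+b} {0..<a} e = real a" using l1 l2 s by simp
qed

lemma K_NGG: assumes "1 \<le> a" "1 \<le> b"
  shows "NGG (complete_bipartite a b) = sqrt (real a * real b)"
proof -
  interpret bipg "complete_bipartite a b" "{0..<a}" "{a..<a+b}" by (rule K_bipg[OF assms(1,2)])
  have "NGG (complete_bipartite a b) = (\<Sum>e\<in>edges (complete_bipartite a b). 1 / sqrt (real b * real a))"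
    unfolding NGG_eq by (rule sum.cong[OF refl]) (simp add: K_nS[OF assms])
  also have "\<dots> = real a * real b / sqrt (real a * real b)" by (simp add: K_card_edges mult.commute)
  also have "\<dots> = sqrt (real a * real b)"
    by (rule real_div_sqrt) simp
  finally show ?thesis .
qed

lemma K_GG: assumes "1 \<le> a" "1 \<le> b"
  shows "GG (complete_bipartite a b) = sqrt (real (a + b) - 2) * NGG (complete_bipartite a b)"
proof -
  interpret bipg "complete_bipartite a b" "{0..<a}" "{a..<a+b}" by (rule K_bipg[OF assms(1,2)])
  have "GG (complete_bipartite a b) = (\<Sum>e\<in>edges (complete_bipartite a b). sqrt (real (a + b) - 2) * (1 / sqrt (real b * real a)))"
    unfolding GG_eq
  proof (rule sum.cong[OF refl])
    fix e assume e: "e \<in> edges (complete_bipartite a b)"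
    have pq: "real b * real a > 0" using assms by simp
    show "sqrt ((nS (complete_bipartite a b) {0..<a} {a..<a + b} e + nS (complete_bipartite a b) {a..<a + b} {0..<a} e - 2) /
         (nS (complete_bipartite a b) {0..<a} {a..<a + b} e * nS (complete_bipartite a b) {a..<a + b} {0..<a} e)) =
         sqrt (real (a + b) - 2) * (1 / sqrt (real b * real a))"
      unfolding K_nS[OF assms e] using pq by (simp add: real_sqrt_divide add.commute)
  qed
  also have "\<dots> = sqrt (real (a + b) - 2) * NGG (complete_bipartite a b)"
    unfolding NGG_eq by (simp add: sum_distrib_left K_nS[OF assms])
  finally show ?thesis .
qed



lemma prod_bound:
  fixes x y n :: nat
  assumes "x + y = n"
  shows "x * y \<le> (n div 2) * (n - n div 2)"
    and "x * y = (n div 2) * (n - n div 2) \<Longrightarrow> x = n div 2 \<or> x = n - n div 2"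
proof -
  define a where "a = n div 2"
  define b where "b = n - n div 2"
  have ab: "a + b = n" "a \<le> b" "b \<le> a + 1" unfolding a_def b_def by auto
  have yv: "int y = int a + int b - int x" using assms ab by simp
  have id: "int x * int y - int a * int b = (int x - int a) * (int b - int x)"
    unfolding yv by (simp add: algebra_simps)
  have sgn: "(int x - int a) * (int b - int x) \<le> 0"
  proof (cases "x \<le> a")
    case True
    then show ?thesis using ab by (intro mult_nonpos_nonneg) auto
  next
    case False
    then have "x \<ge> b" using ab by linarith
    then show ?thesis using ab by (intro mult_nonneg_nonpos) auto
  qed
  have "int x * int y \<le> int a * int b" using id sgn by linarith
  then have "x * y \<le> a * b" by (simp only: of_nat_mult[symmetric] of_nat_le_iff)
  then show "x * y \<le> (n div 2) * (n - n div 2)" unfolding a_def b_def .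
  assume "x * y = (n div 2) * (n - n div 2)"
  then have "int x * int y = int a * int b" unfolding a_def b_def by (simp only: of_nat_mult[symmetric])
  then have "(int x - int a) * (int b - int x) = 0" using id by simp
  then have "x = a \<or> x = b" by auto
  then show "x = n div 2 \<or> x = n - n div 2" unfolding a_def b_def .
qed

lemma iso_K:
  assumes "bipg G P Q" "\<forall>p\<in>P. \<forall>q\<in>Q. adj G p q" "card P = a" "card Q = b"
  shows "graph_iso G (complete_bipartite a b)"
proof -
  interpret bipg G P Q by (rule assms(1))
  obtain g where g: "bij_betw g P {0..<a}" using finite_same_card_bij[OF finX _ ] assms(3) by force
  obtain h where h: "bij_betw h Q {a..<a+b}" using finite_same_card_bij[OF finY _ ] assms(4) by force
  define f where "f z = (if z \<in> P then g z else h z)" for z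
  have g': "bij_betw f P {0..<a}" using g unfolding f_def by (rule bij_betw_cong[THEN iffD1, rotated]) auto
  have "bij_betw f Q {a..<a+b} = bij_betw h Q {a..<a+b}"
    by (rule bij_betw_cong) (use disj in \<open>auto simp: f_def\<close>)
  then have h': "bij_betw f Q {a..<a+b}" using h by simp
  have "bij_betw f (P \<union> Q) ({0..<a} \<union> {a..<a+b})" by (rule bij_betw_combine[OF g' h']) auto
  then have bf: "bij_betw f (verts G) (verts (complete_bipartite a b))"
    unfolding un K_verts by (simp add: ivl_disj_un)
  have fP: "f z < a" if "z \<in> P" for z using g' that by (auto simp: bij_betw_def)
  have fQ: "a \<le> f z \<and> f z < a + b" if "z \<in> Q" for z using h' that by (auto simp: bij_betw_def)
  have "{u, w} \<in> edges G \<longleftrightarrow> {f u, f w} \<in> edges (complete_bipartite a b)"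
    if u: "u \<in> verts G" and w: "w \<in> verts G" for u w
  proof -
    have "{u, w} \<in> edges G \<longleftrightarrow> adj G u w" by (simp add: adj_def)
    also have "\<dots> \<longleftrightarrow> (u \<in> P \<and> w \<in> Q) \<or> (u \<in> Q \<and> w \<in> P)"
      using adj_sides[of u w] assms(2) adj_sym[of G w u] by blast
    also have "\<dots> \<longleftrightarrow> adj (complete_bipartite a b) (f u) (f w)"
    proof -
      have uu: "u \<in> P \<or> u \<in> Q" "w \<in> P \<or> w \<in> Q" using u w un by auto
      show ?thesis unfolding K_adj using uu fP fQ disj by (metis disjoint_iff not_le)
    qed
    also have "\<dots> \<longleftrightarrow> {f u, f w} \<in> edges (complete_bipartite a b)" by (simp add: adj_def)
    finally show ?thesis .
  qed
  then show ?thesis unfolding graph_iso_def using bf by blast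
qed



lemma (in bipg) edges_ne: assumes "card (verts G) \<ge> 2" shows "edges G \<noteq> {}"
proof -
  obtain u v where uv: "u \<in> verts G" "v \<in> verts G" "u \<noteq> v"
  proof -
    have "\<not> (\<forall>a1\<in>verts G. \<forall>a2\<in>verts G. a1 = a2)" using assms card_le_Suc0_iff_eq[OF finV] by simp
    then show ?thesis using that by blast
  qed
  obtain p where p: "walk G p" "hd p = u" "last p = v" "length p = Suc (dist G u v)"
    using dist_ex[OF conn uv(1,2)] by blast
  have "dist G u v \<ge> 1" by (rule dist_pos[OF conn uv])
  then have "adj G (p!0) (p!1)" using walk_adj[OF p(1), of 0] p(4) by simp
  then show ?thesis unfolding adj_def by blast
qed

lemma (in bipg) card_XY: "card X + card Y = card (verts G)"
  using card_Un_disjoint[OF finX finY disj] un by simp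

theorem theorem5:
  fixes n :: nat
  assumes "n \<ge> 2"
  defines "K \<equiv> complete_bipartite (n div 2) (n - n div 2)"
  shows "simple_graph K \<and> connected_graph K \<and> bipartite K \<and> card (verts K) = n \<and>
    (\<forall>G :: 'a graph. simple_graph G \<and> connected_graph G \<and> bipartite G \<and> card (verts G) = n
       \<longrightarrow> NGG G \<le> NGG K \<and> GG G \<le> GG K \<and>
           (NGG G = NGG K \<longrightarrow> graph_iso G K) \<and>
           (GG G = GG K \<longrightarrow> graph_iso G K))"
proof -
  define a where "a = n div 2"
  define b where "b = n - n div 2"
  have a1: "1 \<le> a" and b1: "1 \<le> b" and abn: "a + b = n" using assms(1) unfolding a_def b_def by auto
  have Kd: "K = complete_bipartite a b" unfolding K_def a_def b_def ..
  have NK: "NGG K = sqrt (real a * real b)" unfolding Kd by (rule K_NGG[OF a1 b1])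
  have GK: "GG K = sqrt (real n - 2) * NGG K" unfolding Kd using K_GG[OF a1 b1] abn by simp
  have part1: "simple_graph K \<and> connected_graph K \<and> bipartite K \<and> card (verts K) = n"
    unfolding Kd using K_simple K_conn[OF a1 b1] K_bip[OF a1 b1] abn by (simp add: K_verts)
  have part2: "NGG G \<le> NGG K \<and> GG G \<le> GG K \<and>
           (NGG G = NGG K \<longrightarrow> graph_iso G K) \<and> (GG G = GG K \<longrightarrow> graph_iso G K)"
    if hG: "simple_graph G" "connected_graph G" "bipartite G" "card (verts G) = n" for G :: "'a graph"
  proof -
    obtain X Y where XY: "X \<inter> Y = {}" "X \<union> Y = verts G" "\<forall>e\<in>edges G. \<exists>x\<in>X. \<exists>y\<in>Y. e = {x, y}"
      using hG(3) unfolding bipartite_def by blast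
    interpret bipg G X Y by (rule bipg.intro[OF hG(1,2) XY])
    have cXY: "card X + card Y = n" using card_XY hG(4) by simp
    have pb: "card X * card Y \<le> a * b" using prod_bound(1)[OF cXY] unfolding a_def b_def .
    have sq: "sqrt (real (card X) * real (card Y)) \<le> NGG K"
      unfolding NK using pb by (simp only: of_nat_mult[symmetric] of_nat_le_iff real_sqrt_le_iff)
    have N1: "NGG G \<le> NGG K" using NGG_le sq by linarith
    have s0: "sqrt (real n - 2) \<ge> 0" using assms(1) by simp
    have G1: "GG G \<le> GG K"
    proof -
      have "GG G \<le> sqrt (real n - 2) * NGG G" using GG_le hG(4) by simp
      also have "\<dots> \<le> sqrt (real n - 2) * NGG K" by (intro mult_left_mono N1 s0)
      finally show ?thesis unfolding GK .
    qed
    have isoN: "graph_iso G K" if eq: "NGG G = NGG K"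
    proof -
      have comp: "\<forall>x\<in>X. \<forall>y\<in>Y. adj G x y"
      proof (intro ballI, rule ccontr)
        fix x y assume "x \<in> X" "y \<in> Y" "\<not> adj G x y"
        from NGG_less[OF this] show False using sq eq by linarith
      qed
      have "sqrt (real a * real b) \<le> sqrt (real (card X) * real (card Y))" using NGG_le eq NK by linarith
      then have "a * b \<le> card X * card Y" by (simp only: of_nat_mult[symmetric] of_nat_le_iff real_sqrt_le_iff)
      then have "card X * card Y = (n div 2) * (n - n div 2)" using pb unfolding a_def b_def by simp
      from prod_bound(2)[OF cXY this] have "card X = a \<or> card X = b" unfolding a_def b_def .
      then show ?thesis
      proof
        assume "card X = a"
        then have "card Y = b" using cXY abn by simp
        then show ?thesis unfolding Kd using iso_K[OF bipg_axioms comp \<open>card X = a\<close>] by simp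
      next
        assume "card X = b"
        then have "card Y = a" using cXY abn by simp
        have comp': "\<forall>y\<in>Y. \<forall>x\<in>X. adj G y x"
        proof (intro ballI)
          fix y x assume "y \<in> Y" "x \<in> X"
          then have "adj G x y" using comp by blast
          then show "adj G y x" by (rule adj_sym)
        qed
        show ?thesis unfolding Kd using iso_K[OF swap comp' \<open>card Y = a\<close> \<open>card X = b\<close>] .
      qed
    qed
    have isoG: "graph_iso G K" if eq: "GG G = GG K"
    proof (cases "n = 2")
      case False
      then have s1: "sqrt (real n - 2) > 0" using assms(1) by simp
      have "sqrt (real n - 2) * NGG K \<le> sqrt (real n - 2) * NGG G"
        using eq GK GG_le hG(4) by simp
      then have "NGG K \<le> NGG G" using s1 by simp
      then show ?thesis using isoN N1 by simp
    next
      case True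
      have ne: "edges G \<noteq> {}" using edges_ne hG(4) assms(1) by simp
      then obtain e where e: "e \<in> edges G" by blast
      have es: "sel X e \<in> X" "sel Y e \<in> Y" "adj G (sel X e) (sel Y e)" using edge_sel[OF e] by auto
      have "card X \<ge> 1" "card Y \<ge> 1" using es(1,2) finX finY by (auto simp: Suc_le_eq card_gt_0_iff)
      then have cX: "card X = 1" and cY: "card Y = 1" using cXY True by auto
      then obtain x y where "X = {x}" "Y = {y}" by (auto simp: card_Suc_eq)
      then have comp: "\<forall>x\<in>X. \<forall>y\<in>Y. adj G x y" using es by simp
      have "a = 1" "b = 1" using True unfolding a_def b_def by auto
      then show ?thesis unfolding Kd using iso_K[OF bipg_axioms comp cX cY] by simp
    qed
    show ?thesis using N1 G1 isoN isoG by blast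
  qed
  show ?thesis using part1 part2 by blast
qed


end
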